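(* For the Rogers--Szeg\H{o} polynomials, we have \[ \mu_{n,m} = \begin{bmatrix} n \\ m \end{bmatrix}_q q^{\frac{(n-m)^2}{2}}, \] where \( \begin{bmatrix} n \\ m \end{bmatrix}_q \) is the \( q \)-binomial coefficient given by \( \begin{bmatrix} n \\ m \end{bmatrix}_q =\frac{(1-q^n)(1-q^{n-1})\cdots(1-q^{n-m+1})}{(1-q^m)(1-q^{m-1})\cdots(1-q)} \).
   Context: Let \( (\Phi_n(z))_{n\ge0} \) be monic orthogonal polynomials on the unit circle (OPUC) with \( \deg\Phi_n=n \), \( \Phi_0=1 \), satisfying Szeg\H{o}'s recurrence \( \Phi_{n+1}(z) = z\Phi_n(z) - \overline{\alpha_n}\Phi_n^*(z) \), where \( \Phi_n^*(z)=z^n\overline{\Phi_n}(1/z) \) is the reverse polynomial and \( (\alpha_n)_{n\ge0} \) are the Verblunsky coefficients with \( |\alpha_n|<1 \). They are orthogonal with respect to the linear functional \( \mathcal{L} \) on Laurent polynomials with \( \mathcal{L}(1)=1 \) and \( \mathcal{L}(\Phi_m(z)\overline{\Phi_n}(1/z))=\kappa_n\delta_{m,n} \), \( \kappa_n>0 \). Define the inner product \( \langle f(z),g(z)\rangle=\mathcal{L}(f(z)\overline{g}(1/z)) \), the generalized moment \( \mu_{n,r,s}=\langle \Phi_s(z),z^n\Phi_r(z)\rangle/\langle\Phi_s(z),\Phi_s(z)\rangle \), and \( \mu_{n,m}=\mu_{n,0,m} \). For \( q\in(0,1) \), the Rogers--Szeg\H{o} polynomials are the OPUC with Verblunsky coefficients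 \( \alpha_n=(-1)^nq^{(n+1)/2} \), \( n\ge0 \). *)

theory Defs
  imports "HOL-Analysis.Analysis" "HOL-Computational_Algebra.Polynomial"
begin

text \<open>Reverse polynomial of a polynomial of (formal) degree n:
  p^*(z) = z^n conj(p)(1/z), i.e. coefficient k is conj(coeff p (n-k)) for k \<le> n.\<close>
definition reverse_poly :: "nat \<Rightarrow> complex poly \<Rightarrow> complex poly" where
  "reverse_poly n p = (\<Sum>k\<le>n. monom (cnj (coeff p (n - k))) k)"

text \<open>Monic OPUC from Verblunsky coefficients via Szego's recurrence.\<close>
fun opuc :: "(nat \<Rightarrow> complex) \<Rightarrow> nat \<Rightarrow> complex poly" where
  "opuc \<alpha> 0 = 1"
| "opuc \<alpha> (Suc n) = [:0, 1:] * opuc \<alpha> n - smult (cnj (\<alpha> n)) (reverse_poly n (opuc \<alpha> n))"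

text \<open>A linear functional L on Laurent polynomials is determined by its moments
  c k = L(z^k), k \<in> \<int>.  The inner product <f,g> = L(f(z) conj(g)(1/z)) written out.\<close>
definition lp_inner :: "(int \<Rightarrow> complex) \<Rightarrow> complex poly \<Rightarrow> complex poly \<Rightarrow> complex" where
  "lp_inner c f g = (\<Sum>i\<le>degree f. \<Sum>j\<le>degree g.
      coeff f i * cnj (coeff g j) * c (int i - int j))"

definition gen_moment :: "(int \<Rightarrow> complex) \<Rightarrow> (nat \<Rightarrow> complex) \<Rightarrow> nat \<Rightarrow> nat \<Rightarrow> nat \<Rightarrow> complex" where
  "gen_moment c \<alpha> n r s =
     lp_inner c (opuc \<alpha> s) (monom 1 n * opuc \<alpha> r) / lp_inner c (opuc \<alpha> s) (opuc \<alpha> s)"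

text \<open>Verblunsky coefficients of the Rogers--Szego polynomials.\<close>
definition rs_alpha :: "real \<Rightarrow> nat \<Rightarrow> complex" where
  "rs_alpha q n = complex_of_real ((-1) ^ n * q powr ((real n + 1) / 2))"

definition q_binom :: "real \<Rightarrow> nat \<Rightarrow> nat \<Rightarrow> real" where
  "q_binom q n m = (\<Prod>i<m. 1 - q ^ (n - i)) / (\<Prod>i<m. 1 - q ^ (i + 1))"

end

theory Submission
  imports Defs
begin

lemma qb_zero[simp]: "q_binom q n 0 = 1"
  by (simp add: q_binom_def)

lemma qb_gt: "n < k \<Longrightarrow> q_binom q n k = 0"
proof -
  assume "n < k"
  hence "(\<Prod>i<k. 1 - q ^ (n - i)) = 0"
    by (intro prod_zero) (auto intro!: bexI[of _ n])
  thus ?thesis by (simp add: q_binom_def)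
qed

lemma den_nz: "0 < q \<Longrightarrow> q < 1 \<Longrightarrow> (\<Prod>i<k. 1 - q ^ (i + 1)) \<noteq> (0::real)"
proof -
  assume "0 < q" "q < 1"
  hence "\<forall>i. q ^ (i+1) < 1" by (metis power_strict_mono less_eq_real_def power_one zero_less_Suc Suc_eq_plus1 power_Suc0_right)
  hence "\<forall>i. q ^ Suc i \<noteq> 1" by (metis Suc_eq_plus1 less_irrefl)
  thus ?thesis by (simp add: prod_zero_iff del: power_Suc)
qed

lemma qb_pascal1:
  assumes "0 < q" "q < 1"
  shows "q_binom q (Suc n) (Suc k) = q_binom q n k + q ^ Suc k * q_binom q n (Suc k)"
proof -
  define P where "P = (\<Prod>i<k. 1 - q ^ (n - i))"
  define D where "D = (\<Prod>i<k. 1 - q ^ (i + 1))"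
  have D: "D \<noteq> 0" unfolding D_def by (rule den_nz[OF assms])
  have k1: "1 - q ^ Suc k \<noteq> 0" using power_Suc_less_one[OF assms, of k] by linarith
  have "(\<Prod>i<Suc k. 1 - q ^ (Suc n - i)) = (1 - q ^ Suc n) * P"
    unfolding P_def by (subst prod.lessThan_Suc_shift) simp
  moreover have "(\<Prod>i<Suc k. 1 - q ^ (n - i)) = P * (1 - q ^ (n - k))"
    unfolding P_def by simp
  moreover have "(\<Prod>i<Suc k. 1 - q ^ (i + 1)) = D * (1 - q ^ Suc k)"
    unfolding D_def by simp
  ultimately have e: "q_binom q (Suc n) (Suc k) = (1 - q ^ Suc n) * P / (D * (1 - q ^ Suc k))"
     "q_binom q n (Suc k) = P * (1 - q ^ (n - k)) / (D * (1 - q ^ Suc k))"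
     "q_binom q n k = P / D"
    by (simp_all add: q_binom_def P_def D_def)
  show ?thesis
  proof (cases "k \<le> n")
    case True
    have "q ^ Suc k * q ^ (n - k) = q ^ Suc n"
      using True by (simp add: power_add[symmetric])
    then show ?thesis unfolding e using D k1
      by (simp add: field_simps)
  next
    case False
    then show ?thesis using qb_gt[of n k q] qb_gt[of n "Suc k" q] qb_gt[of "Suc n" "Suc k" q] by simp
  qed
qed

lemma qb_pascal2:
  assumes "0 < q" "q < 1"
  shows "q_binom q (Suc n) (Suc k) = q_binom q n (Suc k) + q ^ (n - k) * q_binom q n k"
proof -
  define P where "P = (\<Prod>i<k. 1 - q ^ (n - i))"
  define D where "D = (\<Prod>i<k. 1 - q ^ (i + 1))"
  have D: "D \<noteq> 0" unfolding D_def by (rule den_nz[OF assms])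
  have k1: "1 - q ^ Suc k \<noteq> 0" using power_Suc_less_one[OF assms, of k] by linarith
  have "(\<Prod>i<Suc k. 1 - q ^ (Suc n - i)) = (1 - q ^ Suc n) * P"
    unfolding P_def by (subst prod.lessThan_Suc_shift) simp
  moreover have "(\<Prod>i<Suc k. 1 - q ^ (n - i)) = P * (1 - q ^ (n - k))"
    unfolding P_def by simp
  moreover have "(\<Prod>i<Suc k. 1 - q ^ (i + 1)) = D * (1 - q ^ Suc k)"
    unfolding D_def by simp
  ultimately have e: "q_binom q (Suc n) (Suc k) = (1 - q ^ Suc n) * P / (D * (1 - q ^ Suc k))"
     "q_binom q n (Suc k) = P * (1 - q ^ (n - k)) / (D * (1 - q ^ Suc k))"
     "q_binom q n k = P / D"
    by (simp_all add: q_binom_def P_def D_def)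
  show ?thesis
  proof (cases "k \<le> n")
    case True
    have qq: "q ^ k * q ^ (n - k) = q ^ n"
      using True by (simp add: power_add[symmetric])
    then show ?thesis unfolding e using D k1
      by (simp add: field_simps)
  next
    case False
    then show ?thesis using qb_gt[of n k q] qb_gt[of n "Suc k" q] qb_gt[of "Suc n" "Suc k" q] by simp
  qed
qed

definition qf :: "real \<Rightarrow> nat \<Rightarrow> real" where "qf q n = (\<Prod>i<n. 1 - q ^ (i + 1))"

lemma qf_Suc: "qf q (Suc n) = qf q n * (1 - q ^ Suc n)" by (simp add: qf_def)

lemma num_qf: "k \<le> n \<Longrightarrow> (\<Prod>i<k. 1 - q ^ (n - i)) * qf q (n - k) = qf q n"
proof (induction k)
  case 0 then show ?case by simp
next
  case (Suc k)
  have "n - k = Suc (n - Suc k)" using Suc.prems by simp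
  hence "qf q (n - k) = qf q (n - Suc k) * (1 - q ^ (n - k))" by (metis qf_Suc)
  then show ?case using Suc by (simp add: mult.assoc[symmetric]) (simp add: mult_ac)
qed

lemma qb_fact:
  assumes "0 < q" "q < 1" "k \<le> n"
  shows "q_binom q n k = qf q n / (qf q k * qf q (n - k))"
proof -
  have nz: "qf q m \<noteq> 0" for m using den_nz[OF assms(1,2)] by (simp add: qf_def)
  show ?thesis using num_qf[OF assms(3), of q] nz[of k] nz[of "n-k"]
    unfolding q_binom_def qf_def[of q k, symmetric]
    by (simp add: field_simps)
qed

lemma qb_sym:
  assumes "0 < q" "q < 1" "k \<le> n"
  shows "q_binom q n (n - k) = q_binom q n k"
  using assms by (simp add: qb_fact mult.commute)

lemma qb_prod:
  assumes "0 < q" "q < 1" "k \<le> m" "m \<le> n"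
  shows "q_binom q n m * q_binom q m k = q_binom q n k * q_binom q (n - k) (m - k)"
proof -
  have nz: "qf q j \<noteq> 0" for j using den_nz[OF assms(1,2)] by (simp add: qf_def)
  have "n - k - (m - k) = n - m" using assms by simp
  then show ?thesis using assms nz by (simp add: qb_fact field_simps)
qed

lemma gauss:
  fixes s x y :: real
  assumes s: "0 < s" "s < 1"
  shows "(\<Sum>j\<le>N. q_binom (s^2) N j * (-1)^j * s^(j*(j-1)) * x^j * y^(N-j))
         = (\<Prod>i<N. y - s^(2*i) * x)"
proof (induction N)
  case 0 then show ?case by simp
next
  case (Suc N)
  have q: "0 < s^2" "s^2 < 1" using s by (auto simp: power_less_one_iff)
  define f where "f N j = q_binom (s^2) N j * (-1)^j * s^(j*(j-1)) * x^j * y^(N-j)" for N j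
  have z: "f N (Suc N) = 0" unfolding f_def using qb_gt[of N "Suc N"] by simp
  have p1: "q_binom (s^2) N (Suc j) * (-1)^(Suc j) * s^(Suc j*(Suc j-1)) * x^(Suc j) * y^(N-j)
      = y * f N (Suc j)" if "j \<le> N" for j
  proof (cases "j = N")
    case True then show ?thesis unfolding f_def using qb_gt[of N "Suc N"] by simp
  next
    case False
    then have "N - j = Suc (N - Suc j)" using that by simp
    then show ?thesis unfolding f_def by (simp add: mult_ac)
  qed
  have p2: "(s^2)^(N-j) * q_binom (s^2) N j * (-1)^(Suc j) * s^(Suc j*(Suc j-1)) * x^(Suc j) * y^(N-j)
      = - (s^(2*N) * x) * f N j" if "j \<le> N" for j
  proof -
    have ex: "2 * (N - j) + Suc j * (Suc j - 1) = 2 * N + j * (j - 1)"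
      using that by (cases j) (auto simp: algebra_simps)
    have E: "(s^2)^(N-j) * s^(Suc j*(Suc j-1)) = s^(2*N) * s^(j*(j-1))"
    proof -
      have "(s^2)^(N-j) * s^(Suc j*(Suc j-1)) = s^(2 * (N - j) + Suc j * (Suc j - 1))"
        by (simp only: power_mult[symmetric] power_add)
      also have "\<dots> = s^(2 * N + j * (j - 1))" by (simp only: ex)
      finally show ?thesis by (simp only: power_add)
    qed
    have "(s^2)^(N-j) * q_binom (s^2) N j * (-1)^(Suc j) * s^(Suc j*(Suc j-1)) * x^(Suc j) * y^(N-j)
       = ((s^2)^(N-j) * s^(Suc j*(Suc j-1))) * (q_binom (s^2) N j * (-1)^(Suc j) * x^(Suc j) * y^(N-j))"
      by (simp only: mult_ac)
    also have "\<dots> = s^(2*N) * s^(j*(j-1)) * (q_binom (s^2) N j * (-1)^(Suc j) * x^(Suc j) * y^(N-j))"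
      by (simp only: E)
    also have "\<dots> = - (s^(2*N) * x) * f N j" unfolding f_def by (simp add: mult_ac)
    finally show ?thesis .
  qed
  have L1: "(\<Sum>j\<le>Suc N. f (Suc N) j) = f (Suc N) 0 + (\<Sum>j\<le>N. f (Suc N) (Suc j))"
    by (subst sum.atMost_Suc_shift) simp
  have L2: "f (Suc N) (Suc j) = y * f N (Suc j) - (s^(2*N) * x) * f N j" if j: "j \<le> N" for j
  proof -
    have "f (Suc N) (Suc j) = (q_binom (s^2) N (Suc j) + (s^2)^(N-j) * q_binom (s^2) N j)
       * (-1)^(Suc j) * s^(Suc j*(Suc j-1)) * x^(Suc j) * y^(N-j)"
      unfolding f_def by (simp add: qb_pascal2[OF q])
    also have "\<dots> = q_binom (s^2) N (Suc j) * (-1)^(Suc j) * s^(Suc j*(Suc j-1)) * x^(Suc j) * y^(N-j)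
       + (s^2)^(N-j) * q_binom (s^2) N j * (-1)^(Suc j) * s^(Suc j*(Suc j-1)) * x^(Suc j) * y^(N-j)"
      by (simp add: algebra_simps)
    also have "\<dots> = y * f N (Suc j) - (s^(2*N) * x) * f N j" using p1[OF j] p2[OF j] by simp
    finally show ?thesis .
  qed
  have L3: "(\<Sum>j\<le>N. f (Suc N) (Suc j)) = y * (\<Sum>j\<le>N. f N (Suc j)) - (s^(2*N) * x) * (\<Sum>j\<le>N. f N j)"
    using L2 by (simp add: sum_subtractf sum_distrib_left)
  have L4: "f (Suc N) 0 = y * f N 0" unfolding f_def by simp
  have L5: "f N 0 + (\<Sum>j\<le>N. f N (Suc j)) = (\<Sum>j\<le>N. f N j)"
    using z sum.atMost_Suc_shift[of "f N" N] sum.atMost_Suc[of "f N" N] by simp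
  have "(\<Sum>j\<le>Suc N. f (Suc N) j) = (y - s^(2*N) * x) * (\<Sum>j\<le>N. f N j)"
    unfolding L1 L3 L4 L5[symmetric] by (simp add: algebra_simps)
  then show ?case using Suc.IH unfolding f_def by simp
qed

lemma exp_id:
  assumes "j \<le> Suc M"
  shows "M * Suc M + j + (Suc M - j)^2 = j*(j-1) + j + (2*Suc M-1)*(Suc M-j)"
proof (cases j)
  case 0
  have b: "2 * Suc M - 1 = Suc (2 * M)" by simp
  show ?thesis unfolding b using 0 by (simp add: power2_eq_square algebra_simps)
next
  case (Suc i)
  then obtain d where d: "M = i + d" using assms le_Suc_ex by auto
  have a: "Suc M - j = d" using d Suc by simp
  have b: "2 * Suc M - 1 = Suc (2 * M)" by simp
  show ?thesis unfolding a b using Suc d by (simp add: power2_eq_square algebra_simps)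
qed

lemma T_zero:
  fixes s :: real
  assumes s: "0 < s" "s < 1" and N: "N \<ge> 1"
  shows "(\<Sum>j\<le>N. q_binom (s^2) N j * (-s)^j * s^((N-j)^2)) = 0"
proof -
  obtain M where M: "N = Suc M" using N by (cases N) auto
  define c where "c = M * Suc M"
  have e: "s^c * ((-s)^j * s^((N-j)^2)) = (-1)^j * s^(j*(j-1)) * s^j * (s^(2*N-1))^(N-j)"
    if "j \<le> N" for j
  proof -
    have ex: "c + j + (N-j)^2 = j*(j-1) + j + (2*N-1)*(N-j)"
      unfolding c_def using exp_id[of j M] that M by simp
    have "s^c * (s^j * s^((N-j)^2)) = s^(c + j + (N-j)^2)" by (simp only: power_add mult.assoc)
    also have "\<dots> = s^(j*(j-1) + j + (2*N-1)*(N-j))" by (simp only: ex)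
    also have "\<dots> = s^(j*(j-1)) * s^j * (s^(2*N-1))^(N-j)" by (simp only: power_add power_mult)
    finally have fin: "s^c * (s^j * s^((N-j)^2)) = s^(j*(j-1)) * s^j * (s^(2*N-1))^(N-j)" .
    have mi: "(-s)^j = (-1)^j * s^j" by (rule power_minus)
    have "s^c * ((-s)^j * s^((N-j)^2)) = (-1)^j * (s^c * (s^j * s^((N-j)^2)))"
      unfolding mi by (simp only: mult_ac)
    also have "\<dots> = (-1)^j * (s^(j*(j-1)) * s^j * (s^(2*N-1))^(N-j))" unfolding fin ..
    finally show ?thesis by (simp only: mult_ac)
  qed
  have "s^c * (\<Sum>j\<le>N. q_binom (s^2) N j * (-s)^j * s^((N-j)^2))
     = (\<Sum>j\<le>N. q_binom (s^2) N j * (-1)^j * s^(j*(j-1)) * s^j * (s^(2*N-1))^(N-j))"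
    unfolding sum_distrib_left
  proof (rule sum.cong[OF refl])
    fix j assume "j \<in> {..N}"
    hence "j \<le> N" by simp
    show "s^c * (q_binom (s^2) N j * (-s)^j * s^((N-j)^2))
       = q_binom (s^2) N j * (-1)^j * s^(j*(j-1)) * s^j * (s^(2*N-1))^(N-j)"
    proof -
      have "s^c * (q_binom (s^2) N j * (-s)^j * s^((N-j)^2)) = q_binom (s^2) N j * (s^c * ((-s)^j * s^((N-j)^2)))"
        by (simp only: mult_ac)
      also have "\<dots> = q_binom (s^2) N j * ((-1)^j * s^(j*(j-1)) * s^j * (s^(2*N-1))^(N-j))"
        by (simp only: e[OF \<open>j \<le> N\<close>])
      finally show ?thesis by (simp only: mult_ac)
    qed
  qed
  also have "\<dots> = (\<Prod>i<N. s^(2*N-1) - s^(2*i) * s)" by (rule gauss[OF s])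
  also have "\<dots> = 0"
  proof (rule prod_zero)
    have "s^(2*(N-1)) * s = s^(2*N-1)" using M by simp
    thus "\<exists>a\<in>{..<N}. s ^ (2 * N - 1) - s ^ (2 * a) * s = 0"
      using M by (intro bexI[of _ "N-1"]) auto
  qed simp
  finally show ?thesis using s by simp
qed

lemma inv_id:
  fixes s :: real
  assumes s: "0 < s" "s < 1"
  shows "(\<Sum>m\<le>n. q_binom (s^2) n m * s^((n-m)^2) * (q_binom (s^2) m k * (-s)^(m-k)))
         = (if n = k then 1 else 0)"
proof -
  have q: "0 < s^2" "s^2 < 1" using s by (auto simp: power_less_one_iff)
  define f where "f m = q_binom (s^2) n m * s^((n-m)^2) * (q_binom (s^2) m k * (-s)^(m-k))" for m
  show ?thesis
  proof (cases "k \<le> n")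
    case False
    have "f m = 0" if "m \<in> {..n}" for m using that False qb_gt[of m k] unfolding f_def by simp
    then show ?thesis using False unfolding f_def[symmetric] by simp
  next
    case True
    define N where "N = n - k"
    have "(\<Sum>m\<le>n. f m) = (\<Sum>m\<in>{k..n}. f m)"
    proof (rule sum.mono_neutral_right)
      show "\<forall>i\<in>{..n} - {k..n}. f i = 0"
        using qb_gt unfolding f_def by auto
    qed auto
    also have "\<dots> = (\<Sum>j\<in>{0..N}. f (k + j))"
      using sum.atLeastAtMost_shift_0[OF True, of f] unfolding N_def by (simp add: comp_def)
    also have "\<dots> = (\<Sum>j\<le>N. q_binom (s^2) n k * (q_binom (s^2) N j * (-s)^j * s^((N-j)^2)))"
    proof (rule sum.cong)
      fix j assume "j \<in> {..N}"
      hence j: "j \<le> N" by simp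
      have "q_binom (s^2) n (k+j) * q_binom (s^2) (k+j) k = q_binom (s^2) n k * q_binom (s^2) N j"
        using qb_prod[OF q, of k "k+j" n] j True unfolding N_def by simp
      moreover have "n - (k + j) = N - j" unfolding N_def by simp
      ultimately show "f (k + j) = q_binom (s^2) n k * (q_binom (s^2) N j * (-s)^j * s^((N-j)^2))"
        unfolding f_def by (simp add: mult_ac)
    qed (simp add: atLeast0AtMost)
    also have "\<dots> = q_binom (s^2) n k * (\<Sum>j\<le>N. q_binom (s^2) N j * (-s)^j * s^((N-j)^2))"
      by (simp add: sum_distrib_left)
    also have "\<dots> = (if n = k then 1 else 0)"
    proof (cases "N = 0")
      case True
      hence "n = k" using \<open>k \<le> n\<close> unfolding N_def by simp
      moreover have "q_binom (s^2) n n = 1"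
      proof -
        have "qf (s^2) n \<noteq> 0" using den_nz[OF q] by (simp add: qf_def)
        thus ?thesis using qb_fact[OF q, of n n] by (simp add: qf_def)
      qed
      ultimately show ?thesis using True by simp
    next
      case False
      then show ?thesis using T_zero[OF s, of N] \<open>k \<le> n\<close> unfolding N_def by auto
    qed
    finally show ?thesis unfolding f_def .
  qed
qed

lemma coeff_reverse_poly:
  "coeff (reverse_poly n p) k = (if k \<le> n then cnj (coeff p (n - k)) else 0)"
  unfolding reverse_poly_def by (simp add: coeff_sum coeff_monom)

lemma qb_nn: assumes "0 < q" "q < 1" shows "q_binom q n n = 1"
proof -
  have "qf q n \<noteq> 0" using den_nz[OF assms] by (simp add: qf_def)
  thus ?thesis using qb_fact[OF assms, of n n] by (simp add: qf_def)
qed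

definition ph :: "real \<Rightarrow> nat \<Rightarrow> nat \<Rightarrow> real" where
  "ph s m k = q_binom (s^2) m k * (-1)^(m-k) * s^(m-k)"

lemma opuc_coeff:
  fixes s :: real
  assumes s: "0 < s" "s < 1"
  shows "coeff (opuc (\<lambda>n. complex_of_real ((-1)^n * s^(n+1))) m) k = complex_of_real (ph s m k)"
proof (induction m arbitrary: k)
  case 0
  show ?case by (cases k) (auto simp: ph_def qb_gt)
next
  case (Suc m)
  have q: "0 < s^2" "s^2 < 1" using s by (auto simp: power_less_one_iff)
  let ?A = "\<lambda>n. complex_of_real ((-1)^n * s^(n+1))"
  let ?P = "opuc ?A m"
  have "coeff (opuc ?A (Suc m)) k = coeff (pCons 0 ?P) k
      - ?A m * (if k \<le> m then of_real (ph s m (m - k)) else 0)"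
  proof -
    have "[:0, 1:] * ?P = pCons 0 ?P" by simp
    hence "coeff (opuc ?A (Suc m)) k = coeff (pCons 0 ?P) k - cnj (?A m) * coeff (reverse_poly m ?P) k"
      by (simp only: opuc.simps coeff_diff coeff_smult)
    also have "cnj (?A m) = ?A m" by (simp only: complex_cnj_complex_of_real)
    also have "coeff (reverse_poly m ?P) k = (if k \<le> m then of_real (ph s m (m - k)) else 0)"
      by (simp only: coeff_reverse_poly Suc.IH complex_cnj_complex_of_real)
    finally show ?thesis .
  qed
  also have "\<dots> = of_real (ph s (Suc m) k)"
  proof (cases k)
    case 0
    then show ?thesis using qb_nn[OF q, of m]
      by (simp add: ph_def)
  next
    case (Suc k')
    show ?thesis
    proof (cases "Suc k' \<le> m")
      case True
      then obtain d where d: "m = Suc k' + d" using le_Suc_ex by blast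
      have sym: "q_binom (s^2) m (m - Suc k') = q_binom (s^2) m (Suc k')"
        using qb_sym[OF q True] .
      have e1: "m - (m - Suc k') = Suc k'" "m - k' = Suc d" "Suc m - Suc k' = Suc d" using d by auto
      have key: "ph s (Suc m) (Suc k') = ph s m k' - (-1)^m * s^(m+1) * ph s m (m - Suc k')"
        unfolding ph_def e1 sym qb_pascal1[OF q]
        unfolding d by (simp add: algebra_simps power_add power_mult_distrib power2_eq_square)
      show ?thesis unfolding Suc coeff_pCons_Suc Suc.IH key if_P[OF True]
        by (simp only: of_real_diff of_real_mult)
    next
      case False
      hence "q_binom (s^2) m (Suc k') = 0" using qb_gt by simp
      moreover have "Suc m - Suc k' = m - k'" by simp
      ultimately have "ph s (Suc m) (Suc k') = ph s m k'"
        by (simp add: ph_def qb_pascal1[OF q])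
      then show ?thesis unfolding Suc coeff_pCons_Suc Suc.IH if_not_P[OF False] by simp
    qed
  qed
  finally show ?case .
qed

lemma sqrt_pow_powr: "0 < q \<Longrightarrow> sqrt q ^ k = q powr (real k / 2)"
proof -
  assume q: "0 < q"
  have e: "sqrt q = q powr (1/2)" using q by (simp add: powr_half_sqrt)
  have "sqrt q ^ k = (q powr (1/2)) powr real k" unfolding e using q by (simp add: powr_realpow)
  also have "(q powr (1/2)) powr real k = q powr (real k / 2)" by (simp add: powr_powr)
  finally show ?thesis .
qed

lemma rs_alpha_eq: "0 < q \<Longrightarrow> rs_alpha q = (\<lambda>n. complex_of_real ((-1)^n * sqrt q^(n+1)))"
proof
  fix n assume q: "0 < q"
  have "real (n+1) / 2 = (real n + 1) / 2" by simp
  then show "rs_alpha q n = complex_of_real ((-1)^n * sqrt q^(n+1))"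
    unfolding rs_alpha_def sqrt_pow_powr[OF q] by (simp add: add.commute)
qed

lemma opuc_deg:
  fixes s :: real
  assumes s: "0 < s" "s < 1"
  shows "degree (opuc (\<lambda>n. complex_of_real ((-1)^n * s^(n+1))) m) \<le> m"
proof (rule degree_le, intro allI impI)
  fix i assume "m < i"
  then show "coeff (opuc (\<lambda>n. complex_of_real ((-1)^n * s^(n+1))) m) i = 0"
    by (simp only: opuc_coeff[OF s]) (simp add: ph_def qb_gt)
qed

lemma expansion:
  fixes s :: real
  assumes s: "0 < s" "s < 1"
  shows "monom 1 n = (\<Sum>j\<le>n. smult (complex_of_real (q_binom (s^2) n j * s^((n-j)^2)))
            (opuc (\<lambda>n. complex_of_real ((-1)^n * s^(n+1))) j))"
proof (rule poly_eqI)
  fix k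
  have ph: "ph s j k = q_binom (s^2) j k * (-s)^(j-k)" for j
    unfolding ph_def by (simp add: power_minus[of s] mult.assoc)
  have "coeff (\<Sum>j\<le>n. smult (complex_of_real (q_binom (s^2) n j * s^((n-j)^2)))
            (opuc (\<lambda>n. complex_of_real ((-1)^n * s^(n+1))) j)) k
      = complex_of_real (\<Sum>j\<le>n. q_binom (s^2) n j * s^((n-j)^2) * (q_binom (s^2) j k * (-s)^(j-k)))"
    by (simp only: coeff_sum coeff_smult opuc_coeff[OF s] of_real_sum[symmetric] of_real_mult[symmetric] ph)
  also have "\<dots> = (if n = k then 1 else 0)" by (simp add: inv_id[OF s])
  finally show "coeff (monom 1 n) k = coeff (\<Sum>j\<le>n. smult (complex_of_real (q_binom (s^2) n j * s^((n-j)^2)))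
            (opuc (\<lambda>n. complex_of_real ((-1)^n * s^(n+1))) j)) k"
    by (simp add: coeff_monom)
qed

lemma lp_inner_bound:
  assumes "degree g \<le> K"
  shows "lp_inner c f g = (\<Sum>i\<le>degree f. \<Sum>j\<le>K. coeff f i * cnj (coeff g j) * c (int i - int j))"
  unfolding lp_inner_def
proof (rule sum.cong[OF refl], rule sum.mono_neutral_left)
  show "\<forall>j\<in>{..K} - {..degree g}. coeff f i * cnj (coeff g j) * c (int i - int j) = 0" for i
    by (auto simp: coeff_eq_0)
qed (use assms in auto)

lemma lp_inner_lin:
  assumes "\<And>j. j \<le> n \<Longrightarrow> degree (P j) \<le> n"
  shows "lp_inner c f (\<Sum>j\<le>n. smult (complex_of_real (a j)) (P j))
       = (\<Sum>j\<le>n. complex_of_real (a j) * lp_inner c f (P j))"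
proof -
  let ?G = "\<Sum>j\<le>n. smult (complex_of_real (a j)) (P j)"
  have dG: "degree ?G \<le> n"
  proof (rule degree_le, intro allI impI)
    fix i assume ni: "n < i"
    have "coeff ?G i = (\<Sum>j\<le>n. complex_of_real (a j) * coeff (P j) i)"
      by (simp only: coeff_sum coeff_smult)
    also have "\<dots> = 0"
    proof (rule sum.neutral, rule ballI)
      fix j assume "j \<in> {..n}"
      hence "degree (P j) < i" using assms[of j] ni by auto
      thus "complex_of_real (a j) * coeff (P j) i = 0" by (simp add: coeff_eq_0)
    qed
    finally show "coeff ?G i = 0" .
  qed
  have "lp_inner c f ?G = (\<Sum>i\<le>degree f. \<Sum>l\<le>n. \<Sum>j\<le>n. complex_of_real (a j) *
          (coeff f i * cnj (coeff (P j) l) * c (int i - int l)))"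
    unfolding lp_inner_bound[OF dG]
  proof (intro sum.cong[OF refl])
    fix i l
    have "coeff f i * cnj (coeff ?G l) * c (int i - int l) =
      (\<Sum>j\<le>n. coeff f i * (complex_of_real (a j) * cnj (coeff (P j) l)) * c (int i - int l))"
      by (simp only: coeff_sum coeff_smult cnj_sum complex_cnj_mult complex_cnj_complex_of_real
          sum_distrib_left sum_distrib_right)
    also have "\<dots> = (\<Sum>j\<le>n. complex_of_real (a j) * (coeff f i * cnj (coeff (P j) l) * c (int i - int l)))"
      by (rule sum.cong[OF refl]) (simp only: mult_ac)
    finally show "coeff f i * cnj (coeff ?G l) * c (int i - int l) =
      (\<Sum>j\<le>n. complex_of_real (a j) * (coeff f i * cnj (coeff (P j) l) * c (int i - int l)))" .
  qed
  also have "\<dots> = (\<Sum>i\<le>degree f. \<Sum>j\<le>n. \<Sum>l\<le>n. complex_of_real (a j) *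
          (coeff f i * cnj (coeff (P j) l) * c (int i - int l)))"
    by (rule sum.cong[OF refl]) (rule sum.swap)
  also have "\<dots> = (\<Sum>j\<le>n. \<Sum>i\<le>degree f. \<Sum>l\<le>n. complex_of_real (a j) *
          (coeff f i * cnj (coeff (P j) l) * c (int i - int l)))"
    by (rule sum.swap)
  also have "\<dots> = (\<Sum>j\<le>n. complex_of_real (a j) * lp_inner c f (P j))"
  proof (rule sum.cong[OF refl])
    fix j assume "j \<in> {..n}"
    hence dj: "degree (P j) \<le> n" using assms by simp
    show "(\<Sum>i\<le>degree f. \<Sum>l\<le>n. complex_of_real (a j) *
          (coeff f i * cnj (coeff (P j) l) * c (int i - int l))) = complex_of_real (a j) * lp_inner c f (P j)"
      unfolding lp_inner_bound[OF dj] by (simp only: sum_distrib_left)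
  qed
  finally show ?thesis .
qed

theorem proposition4p13:
  fixes q :: real and c :: "int \<Rightarrow> complex" and \<kappa> :: "nat \<Rightarrow> real"
  assumes "0 < q" and "q < 1"
    and "c 0 = 1"
    and "\<And>n. \<kappa> n > 0"
    and "\<And>m n. lp_inner c (opuc (rs_alpha q) m) (opuc (rs_alpha q) n)
                   = (if m = n then complex_of_real (\<kappa> n) else 0)"
  shows "gen_moment c (rs_alpha q) n 0 m
           = complex_of_real (q_binom q n m * q powr ((real n - real m)^2 / 2))"
proof -
  define s where "s = sqrt q"
  have s: "0 < s" "s < 1" using assms(1,2) unfolding s_def by auto
  have qs: "s^2 = q" using assms(1) unfolding s_def by simp
  define A where "A = (\<lambda>n. complex_of_real ((-1)^n * s^(n+1)))"
  have rA: "rs_alpha q = A" unfolding A_def s_def by (rule rs_alpha_eq[OF assms(1)])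
  define a where "a j = q_binom (s^2) n j * s^((n-j)^2)" for j
  have orth: "lp_inner c (opuc A m) (opuc A j) = (if m = j then complex_of_real (\<kappa> j) else 0)" for j
    using assms(5)[of m j] unfolding rA .
  have "monom 1 n * opuc A 0 = (\<Sum>j\<le>n. smult (complex_of_real (a j)) (opuc A j))"
    using expansion[OF s, of n] unfolding A_def a_def by simp
  hence "lp_inner c (opuc A m) (monom 1 n * opuc A 0)
      = (\<Sum>j\<le>n. complex_of_real (a j) * lp_inner c (opuc A m) (opuc A j))"
    using lp_inner_lin[of n "opuc A" c "opuc A m" a] opuc_deg[OF s] unfolding A_def
    by (metis le_trans)
  also have "\<dots> = (\<Sum>j\<le>n. (if j = m then complex_of_real (a j) * complex_of_real (\<kappa> j) else 0))"
    by (rule sum.cong[OF refl]) (auto simp: orth)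
  also have "\<dots> = (if m \<le> n then complex_of_real (a m) * complex_of_real (\<kappa> m) else 0)"
    by (simp add: sum.delta)
  finally have num: "lp_inner c (opuc A m) (monom 1 n * opuc A 0) = \<dots>" .
  have kp: "complex_of_real (\<kappa> m) \<noteq> 0" using assms(4)[of m] by simp
  have gm: "gen_moment c (rs_alpha q) n 0 m = (if m \<le> n then complex_of_real (a m) else 0)"
    unfolding gen_moment_def rA num orth using kp by auto
  show ?thesis
  proof (cases "m \<le> n")
    case True
    have "(real n - real m)^2 = real ((n - m)^2)" using True by (simp add: of_nat_diff)
    hence "q powr ((real n - real m)^2 / 2) = s ^ ((n-m)^2)"
      unfolding s_def using sqrt_pow_powr[OF assms(1), of "(n-m)^2"] by simp
    then show ?thesis using True unfolding gm a_def qs by simp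
  next
    case False
    then show ?thesis unfolding gm using qb_gt[of n m q] by simp
  qed
qed

end
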